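(* Let $k>0$ be sufficiently large and let $f_k$ be the standard map. For $z\in\mathbb T^2$ let $e^{(1)}(z)$ be the most contracted direction of $Df_k(z)$ and $e^{(-1)}(z)$ the most contracted direction of $D(f_k^{-1})(z)$. Then there is no point $z=(x,y)$ with $y\in[0,\delta^-]\cup[1-\delta^-,1]$ at which $e^{(1)}(z)$ and $e^{(-1)}(z)$ span the same line (i.e. there are no tangencies between the foliations $\mathcal E^{(1)}$ and $\mathcal E^{(-1)}$ in this region).
   Context: The standard map is $f_k(x,y)=(x+k\sin(2\pi y),\,x+y+k\sin(2\pi y))\bmod 1$ on $\mathbb T^2=\mathbb R^2/\mathbb Z^2$. For an invertible linear map $A$ with $\min_{\|v\|=1}\|Av\|<\max_{\|v\|=1}\|Av\|$, its most contracted direction is the line spanned by a unit vector minimizing $\|Av\|$; $\mathcal E^{(\pm1)}$ denote the foliations tangent to $e^{(\pm1)}$. $\delta^-=\frac1{2\pi}\cos^{-1}\!\left(\frac{\sqrt3-1}{4\pi k}\right)$ with $\cos^{-1}\in[0,\pi]$. *)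

theory Defs
  imports "HOL-Analysis.Analysis"
begin

text \<open>Lift to the plane of the standard map f_k on the torus (reduction mod 1
  does not affect derivatives; the lift is a bijection of the plane whose inverse
  lifts f_k^{-1}).\<close>
definition std_map :: "real \<Rightarrow> real \<times> real \<Rightarrow> real \<times> real" where
  "std_map k = (\<lambda>(x, y). (x + k * sin (2 * pi * y), x + y + k * sin (2 * pi * y)))"

definition most_contracted_dir :: "(real \<times> real \<Rightarrow> real \<times> real) \<Rightarrow> real \<times> real \<Rightarrow> bool" where
  "most_contracted_dir A v \<longleftrightarrow>
     linear A \<and>
     (\<exists>u1 u2. norm u1 = 1 \<and> norm u2 = 1 \<and> norm (A u1) < norm (A u2)) \<and>
     norm v = 1 \<and> (\<forall>u. norm u = 1 \<longrightarrow> norm (A v) \<le> norm (A u))"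

definition delta_minus :: "real \<Rightarrow> real" where
  "delta_minus k = arccos ((sqrt 3 - 1) / (4 * pi * k)) / (2 * pi)"

end

theory Submission
  imports Defs
begin

lemma alg:
  fixes c d p q :: real
  assumes c: "1 + 2*c > 0" and pq: "p^2 + q^2 = 1"
  and H1: "\<And>a b. ((p + c*q)^2 + (p + (1+c)*q)^2) * (a^2 + b^2) \<le> (a + c*b)^2 + (a + (1+c)*b)^2"
  and H2: "\<And>a b. (((1+d)*p - d*q)^2 + (q-p)^2) * (a^2 + b^2) \<le> ((1+d)*a - d*b)^2 + (b-a)^2"
  shows False
proof -
  have "((p + c*q)^2 + (p + (1+c)*q)^2) \<le> (p + c*(-q))^2 + (p + (1+c)*(-q))^2"
    using H1[of p "-q"] pq by simp
  then have "0 \<le> -4*(1+2*c)*(p*q)" by (simp add: power2_eq_square algebra_simps)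
  then have "(1+2*c)*(p*q) \<le> 0" by linarith
  then have pq1: "p*q \<le> 0" using c by (auto simp: mult_le_0_iff)
  have "(((1+d)*p - d*q)^2 + (q-p)^2) \<le> ((1+d)*p - d*(-q))^2 + ((-q)-p)^2"
    using H2[of p "-q"] pq by simp
  then have "0 \<le> 4*(d^2+d+1)*(p*q)" by (simp add: power2_eq_square algebra_simps)
  moreover have "d^2+d+1 > 0" proof -
    have "d^2+d+1 = (d+1/2)^2 + 3/4" by (simp add: power2_eq_square algebra_simps)
    moreover have "0 \<le> (d+1/2)^2" by simp
    ultimately show ?thesis by linarith
  qed
  ultimately have "p*q \<ge> 0" by (auto simp: zero_le_mult_iff)
  with pq1 have "p*q = 0" by simp
  then consider "p = 0" | "q = 0" by auto
  then show False
  proof cases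
    case 1
    then have q2: "q^2 = 1" using pq by simp
    define e where "e = c^2 + (1+c)^2"
    define sv where "sv = (1+2*c)/(e+2)"
    have "0 \<le> c^2" "0 \<le> (1+c)^2" by simp_all
    then have ep: "e + 2 > 0" unfolding e_def by linarith
    have sp: "sv > 0" unfolding sv_def using c ep by simp
    have al: "(p + c*q)^2 + (p + (1+c)*q)^2 = e" using 1 q2 by (simp add: e_def power_mult_distrib)
    have "e * ((-sv)^2 + 1^2) \<le> (-sv + c*1)^2 + (-sv + (1+c)*1)^2"
      using H1[of "-sv" 1] unfolding al .
    then have "e * (sv^2 + 1) \<le> 2* sv^2 - 2*(1+2*c)* sv + e"
      by (simp add: e_def power2_eq_square algebra_simps)
    then have "(2 - e) * sv * sv \<ge> 2*(1+2*c)* sv" by (simp add: power2_eq_square algebra_simps)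
    then have "(2 - e) * sv \<ge> 2*(1+2*c)" using sp by (simp add: mult.commute mult_le_cancel_right_pos)
    moreover have "(2 - e) * sv < (1+2*c)"
    proof -
      have "0 < (1+c)^2 + c^2" by (cases "c = 0") (auto intro: add_nonneg_pos)
      then have epos: "e > 0" unfolding e_def by simp
      have "0 < e * (1+2*c)" using epos c by simp
      then show ?thesis unfolding sv_def using ep c by (simp add: field_simps algebra_simps)
    qed
    ultimately show False using c by simp
  next
    case 2
    then have p2: "p^2 = 1" using pq by simp
    define e where "e = c^2 + (1+c)^2"
    define sv where "sv = (1+2*c)/(e+2)"
    have "0 \<le> c^2" "0 \<le> (1+c)^2" by simp_all
    then have ep: "e + 2 > 0" unfolding e_def by linarith
    have sp: "sv > 0" unfolding sv_def using c ep by simp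
    have al: "(p + c*q)^2 + (p + (1+c)*q)^2 = 2" using 2 p2 by simp
    have "2 * (1^2 + (-sv)^2) \<le> (1 + c*(-sv))^2 + (1 + (1+c)*(-sv))^2"
      using H1[of 1 "-sv"] unfolding al .
    then have "2 * (sv^2 + 1) \<le> 2 - 2*(1+2*c)* sv + e* sv^2"
      by (simp add: e_def power2_eq_square algebra_simps)
    then have "(e - 2) * sv * sv \<ge> 2*(1+2*c)* sv" by (simp add: power2_eq_square algebra_simps)
    then have "(e - 2) * sv \<ge> 2*(1+2*c)" using sp by (simp add: mult.commute mult_le_cancel_right_pos)
    moreover have "(e - 2) * sv < (1+2*c)" unfolding sv_def using ep c
      by (simp add: field_simps)
    ultimately show False using c by simp
  qed
qed

lemma mc_ineq:
  assumes "most_contracted_dir A v"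
  shows "(norm (A v))^2 * (norm u)^2 \<le> (norm (A u))^2"
proof (cases "u = 0")
  case True
  have "linear A" using assms unfolding most_contracted_dir_def by simp
  then show ?thesis using True by (simp add: linear_0)
next
  case False
  have lin: "linear A" and min: "\<forall>u. norm u = 1 \<longrightarrow> norm (A v) \<le> norm (A u)"
    using assms unfolding most_contracted_dir_def by auto
  have nu: "norm u > 0" using False by simp
  have "norm (u /\<^sub>R norm u) = 1" using nu by simp
  then have "norm (A v) \<le> norm (A (u /\<^sub>R norm u))" using min by blast
  also have "A (u /\<^sub>R norm u) = (1 / norm u) *\<^sub>R A u" using lin by (simp add: linear_scale divide_inverse)
  finally have "norm (A v) \<le> norm (A u) / norm u" by simp
  then have "norm (A v) * norm u \<le> norm (A u)" using nu by (simp add: field_simps)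
  then have "(norm (A v) * norm u)^2 \<le> (norm (A u))^2"
    by (simp add: power_mono)
  then show ?thesis by (simp add: power_mult_distrib)
qed

definition ginv :: "real \<Rightarrow> real \<times> real \<Rightarrow> real \<times> real" where
  "ginv k = (\<lambda>z. (fst z - k * sin (2 * pi * (snd z - fst z)), snd z - fst z))"

lemma inv_std: "inv (std_map k) = ginv k"
  by (rule inv_equality) (auto simp: std_map_def ginv_def split: prod.splits)

lemma Df_eq:
  assumes "(std_map k has_derivative Df) (at (x, y))"
  shows "Df = (\<lambda>h. (fst h + 2*pi*k*cos (2*pi*y) * snd h,
                     fst h + snd h + 2*pi*k*cos (2*pi*y) * snd h))"
proof -
  have e: "std_map k = (\<lambda>z. (fst z + k * sin (2 * pi * snd z), fst z + snd z + k * sin (2 * pi * snd z)))"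
    unfolding std_map_def by auto
  have "(std_map k has_derivative (\<lambda>h. (fst h + 2*pi*k*cos (2*pi*y) * snd h,
                     fst h + snd h + 2*pi*k*cos (2*pi*y) * snd h))) (at (x, y))"
    unfolding e
    by (auto intro!: derivative_eq_intros simp: algebra_simps)
  then show ?thesis using assms has_derivative_unique by blast
qed

lemma Dg_eq:
  assumes "(ginv k has_derivative Dg) (at (x, y))"
  shows "Dg = (\<lambda>h. ((1 + 2*pi*k*cos (2*pi*(y-x))) * fst h - 2*pi*k*cos (2*pi*(y-x)) * snd h,
                     snd h - fst h))"
proof -
  have "(ginv k has_derivative (\<lambda>h. ((1 + 2*pi*k*cos (2*pi*(y-x))) * fst h - 2*pi*k*cos (2*pi*(y-x)) * snd h,
                     snd h - fst h))) (at (x, y))"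
    unfolding ginv_def
    by (auto intro!: derivative_eq_intros simp: algebra_simps)
  then show ?thesis using assms has_derivative_unique by blast
qed

theorem mainTheorem7:
  shows "\<exists>K>0. \<forall>k\<ge>K. \<forall>x y Df Dg v w.
     y \<in> {0..delta_minus k} \<union> {1 - delta_minus k..1} \<longrightarrow>
     (std_map k has_derivative Df) (at (x, y)) \<longrightarrow>
     (inv (std_map k) has_derivative Dg) (at (x, y)) \<longrightarrow>
     most_contracted_dir Df v \<longrightarrow>
     most_contracted_dir Dg w \<longrightarrow>
     span {v} \<noteq> span {w}"
proof (intro exI[of _ 1] conjI allI impI)
  fix k x y Df Dg v w
  assume k: "1 \<le> (k::real)"
    and yr: "y \<in> {0..delta_minus k} \<union> {1 - delta_minus k..1}"
    and hDf: "(std_map k has_derivative Df) (at (x, y))"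
    and hDg: "(inv (std_map k) has_derivative Dg) (at (x, y))"
    and mv: "most_contracted_dir Df v" and mw: "most_contracted_dir Dg w"
  show "span {v} \<noteq> span {w}"
  proof
    assume sp: "span {v} = span {w}"
    define r where "r = (sqrt 3 - 1) / (4 * pi * k)"
    have s3: "1 \<le> sqrt 3" "sqrt 3 \<le> 2"
    proof -
      have "sqrt 1 \<le> sqrt 3" by (rule real_sqrt_le_mono) simp
      then show "1 \<le> sqrt 3" by simp
      have "sqrt 3 \<le> sqrt (2^2)" by (rule real_sqrt_le_mono) simp
      then show "sqrt 3 \<le> 2" by simp
    qed
    have r0: "0 \<le> r" unfolding r_def using s3 k by simp
    have "1 * 1 \<le> pi * k" using k pi_ge_two by (intro mult_mono) auto
    then have "4 * pi * k \<ge> 4" by linarith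
    then have r1: "r \<le> 1" unfolding r_def using s3 by (simp add: divide_le_eq)
    have ar: "arccos r \<le> pi/2" using arccos_le_pi2 r0 r1 by blast
    have dm: "2*pi*delta_minus k \<le> pi/2" unfolding delta_minus_def r_def[symmetric] using ar by simp
    have cy: "cos (2*pi*y) \<ge> 0"
      using yr
    proof
      assume "y \<in> {0..delta_minus k}"
      then have "0 \<le> 2*pi*y" "2*pi*y \<le> pi/2" using dm by (auto intro: order_trans)
      then show ?thesis by (intro cos_ge_zero) linarith+
    next
      assume "y \<in> {1 - delta_minus k..1}"
      then have "-(pi/2) \<le> 2*pi*y - 2*pi" "2*pi*y - 2*pi \<le> 0" using dm by (auto simp: algebra_simps)
      then have "0 \<le> cos (2*pi*y - 2*pi)" by (intro cos_ge_zero) auto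
      also have "cos (2*pi*y - 2*pi) = cos (2*pi*y)" by (simp add: cos_diff)
      finally show ?thesis .
    qed
    define c where "c = 2*pi*k*cos (2*pi*y)"
    define d where "d = 2*pi*k*cos (2*pi*(y-x))"
    have "0 \<le> (2*pi*k)*cos (2*pi*y)" using cy k by (intro mult_nonneg_nonneg) auto
    then have c0: "1 + 2*c > 0" unfolding c_def by linarith
    have DfE: "Df = (\<lambda>h. (fst h + c * snd h, fst h + snd h + c * snd h))"
      using Df_eq[OF hDf] unfolding c_def by simp
    have DgE: "Dg = (\<lambda>h. ((1 + d) * fst h - d * snd h, snd h - fst h))"
      using Dg_eq[of k Dg x y] hDg unfolding inv_std d_def by simp
    obtain p q where v: "v = (p, q)" by (cases v)
    have nv: "norm v = 1" "norm w = 1" using mv mw unfolding most_contracted_dir_def by auto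
    have n2: "\<And>a b::real. (norm (a, b))^2 = a^2 + b^2" by (simp add: norm_Pair)
    have pq: "p^2 + q^2 = 1" using nv(1) n2[of p q] v by simp
    have "w \<in> span {v}" using sp by (simp add: span_base)
    then obtain t where wt: "w = t *\<^sub>R v" by (auto simp: span_singleton)
    have "\<bar>t\<bar> = 1" using nv wt by simp
    have linDg: "linear Dg" using mw unfolding most_contracted_dir_def by simp
    have ndg: "norm (Dg w) = norm (Dg v)" using wt \<open>\<bar>t\<bar> = 1\<close> linDg by (simp add: linear_scale)
    show False
    proof (rule alg[OF c0 pq])
      fix a b :: real
      have "(norm (Df v))^2 * (norm (a,b))^2 \<le> (norm (Df (a,b)))^2" by (rule mc_ineq[OF mv])
      then show "((p + c*q)^2 + (p + (1+c)*q)^2) * (a^2 + b^2) \<le> (a + c*b)^2 + (a + (1+c)*b)^2"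
        unfolding DfE v n2 by (simp add: algebra_simps)
    next
      fix a b :: real
      have "(norm (Dg w))^2 * (norm (a,b))^2 \<le> (norm (Dg (a,b)))^2" by (rule mc_ineq[OF mw])
      then have "(norm (Dg v))^2 * (norm (a,b))^2 \<le> (norm (Dg (a,b)))^2" using ndg by simp
      then show "(((1+d)*p - d*q)^2 + (q-p)^2) * (a^2 + b^2) \<le> ((1+d)*a - d*b)^2 + (b-a)^2"
        unfolding DgE v n2 by simp
    qed
  qed
qed simp

end
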